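(* Let $\pi$ be a probability density on a state space $\Omega$. Let $\{P(\cdot,\cdot;\zeta)\}$ be a family of Markov transition densities indexed by a stochastic sample $\zeta$, where $\zeta$ is drawn from a known fixed distribution, and fix $T\ge1$. Consider the chain that, from state $x$, sets $x_0=x$, and for $t=0,\dots,T-1$ samples $\zeta_t$ independently from that distribution and then $x_{t+1}\sim P(x_t,\cdot\,;\zeta_t)$; it sets $y=x_T$, computes $\tau=\min\left(1,\ \frac{\pi(y)}{\pi(x)}\prod_{t=0}^{T-1}\frac{P(x_{t+1},x_t;\zeta_t)}{P(x_t,x_{t+1};\zeta_t)}\right),$ and moves to $y$ with probability $\tau$, otherwise stays at $x$. Then this chain is reversible with respect to $\pi$, i.e. $\pi(x)G(x,y)=\pi(y)G(y,x)$ for its transition kernel $G$, and in particular has stationary distribution $\pi$. *)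

theory Defs
  imports "HOL-Probability.Probability"
begin

text \<open>State space: a measure space M (reference measure, densities are w.r.t. M).
  Noise space: a probability measure D (law of zeta).
  A path of the inner chain started at x is x_0 = x, x_1, ..., x_T, stored as
  the initial point x together with a function xs on {1..T}.\<close>

definition mc_path :: "'a \<Rightarrow> (nat \<Rightarrow> 'a) \<Rightarrow> nat \<Rightarrow> 'a" where
  "mc_path x xs t = (if t = 0 then x else xs t)"

definition path_weight ::
  "('a \<Rightarrow> 'a \<Rightarrow> 'z \<Rightarrow> real) \<Rightarrow> nat \<Rightarrow> 'a \<Rightarrow> (nat \<Rightarrow> 'a) \<Rightarrow> (nat \<Rightarrow> 'z) \<Rightarrow> real" where
  "path_weight P T x xs zs =
     (\<Prod>t<T. P (mc_path x xs t) (mc_path x xs (Suc t)) (zs t))"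

text \<open>Acceptance probability tau (with Isabelle's convention a / 0 = 0).\<close>
definition accept_prob ::
  "('a \<Rightarrow> real) \<Rightarrow> ('a \<Rightarrow> 'a \<Rightarrow> 'z \<Rightarrow> real) \<Rightarrow> nat \<Rightarrow> 'a \<Rightarrow> (nat \<Rightarrow> 'a) \<Rightarrow> (nat \<Rightarrow> 'z) \<Rightarrow> real" where
  "accept_prob \<pi> P T x xs zs =
     min 1 (\<pi> (xs T) / \<pi> x *
       (\<Prod>t<T. P (mc_path x xs (Suc t)) (mc_path x xs t) (zs t)
               / P (mc_path x xs t) (mc_path x xs (Suc t)) (zs t)))"

definition mh_kernel ::
  "'a measure \<Rightarrow> 'z measure \<Rightarrow> ('a \<Rightarrow> real) \<Rightarrow> ('a \<Rightarrow> 'a \<Rightarrow> 'z \<Rightarrow> real) \<Rightarrow> nat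
     \<Rightarrow> 'a \<Rightarrow> 'a set \<Rightarrow> ennreal" where
  "mh_kernel M D \<pi> P T x A =
     (\<integral>\<^sup>+ zs. (\<integral>\<^sup>+ xs.
         ennreal (path_weight P T x xs zs) *
         (ennreal (accept_prob \<pi> P T x xs zs) * indicator A (xs T)
          + ennreal (1 - accept_prob \<pi> P T x xs zs) * indicator A x)
       \<partial>(PiM {1..T} (\<lambda>_. M))) \<partial>(PiM {..<T} (\<lambda>_. D)))"

text \<open>Density G(x,y) (w.r.t. M) of the accepted-move part of the kernel, i.e. the
  transition density of G off the diagonal: x_T is fixed to y, the intermediate
  states x_1..x_{T-1} and the samples are integrated out.\<close>
definition mh_density ::
  "'a measure \<Rightarrow> 'z measure \<Rightarrow> ('a \<Rightarrow> real) \<Rightarrow> ('a \<Rightarrow> 'a \<Rightarrow> 'z \<Rightarrow> real) \<Rightarrow> nat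
     \<Rightarrow> 'a \<Rightarrow> 'a \<Rightarrow> ennreal" where
  "mh_density M D \<pi> P T x y =
     (\<integral>\<^sup>+ zs. (\<integral>\<^sup>+ xs.
         ennreal (path_weight P T x (xs(T := y)) zs * accept_prob \<pi> P T x (xs(T := y)) zs)
       \<partial>(PiM {1..<T} (\<lambda>_. M))) \<partial>(PiM {..<T} (\<lambda>_. D)))"

end

theory Submission
  imports Defs
begin


lemma PiM_reindex_invol:
  fixes N :: "'b measure" and I :: "'i set" and g :: "'i \<Rightarrow> 'i"
  assumes N: "sigma_finite_measure N" and I: "finite I"
    and g: "\<And>i. i \<in> I \<Longrightarrow> g i \<in> I" "\<And>i. i \<in> I \<Longrightarrow> g (g i) = i"
  shows "distr (PiM I (\<lambda>_. N)) (PiM I (\<lambda>_. N)) (\<lambda>\<omega>. \<lambda>i\<in>I. \<omega> (g i)) = PiM I (\<lambda>_. N)"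
proof -
  interpret product_sigma_finite "\<lambda>_. N" using N by (simp add: product_sigma_finite_def)
  have meas: "(\<lambda>\<omega>. \<lambda>i\<in>I. \<omega> (g i)) \<in> measurable (PiM I (\<lambda>_. N)) (PiM I (\<lambda>_. N))"
    by (rule measurable_PiM_single') (auto simp: space_PiM g intro!: measurable_component_singleton)
  have bij: "bij_betw g I I"
    by (rule bij_betwI[where g=g]) (auto simp: g)
  show ?thesis
  proof (rule PiM_eqI[OF I])
    show "sets (distr (PiM I (\<lambda>_. N)) (PiM I (\<lambda>_. N)) (\<lambda>\<omega>. \<lambda>i\<in>I. \<omega> (g i))) = sets (PiM I (\<lambda>_. N))"
      by simp
    fix A assume A: "\<And>i. i \<in> I \<Longrightarrow> A i \<in> sets N"
    have pre: "(\<lambda>\<omega>. \<lambda>i\<in>I. \<omega> (g i)) -` Pi\<^sub>E I A \<inter> space (PiM I (\<lambda>_. N)) = Pi\<^sub>E I (\<lambda>i. A (g i))"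
      using A[THEN sets.sets_into_space] g
      by (auto simp: space_PiM PiE_iff extensional_def) (metis subsetD)+
    have "emeasure (distr (PiM I (\<lambda>_. N)) (PiM I (\<lambda>_. N)) (\<lambda>\<omega>. \<lambda>i\<in>I. \<omega> (g i))) (Pi\<^sub>E I A)
        = emeasure (PiM I (\<lambda>_. N)) (Pi\<^sub>E I (\<lambda>i. A (g i)))"
      using A by (subst emeasure_distr[OF meas]) (auto simp: pre intro!: sets_PiM_I_finite I)
    also have "\<dots> = (\<Prod>i\<in>I. emeasure N (A (g i)))"
      using A g by (subst emeasure_PiM[OF I]) auto
    also have "\<dots> = (\<Prod>i\<in>I. emeasure N (A i))"
      using prod.reindex_bij_betw[OF bij, of "\<lambda>i. emeasure N (A i)"] by simp
    finally show "emeasure (distr (PiM I (\<lambda>_. N)) (PiM I (\<lambda>_. N)) (\<lambda>\<omega>. \<lambda>i\<in>I. \<omega> (g i))) (Pi\<^sub>E I A)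
        = (\<Prod>i\<in>I. emeasure N (A i))" .
  qed
qed

lemma real_db:
  fixes a b c d :: real
  assumes "0 \<le> a" "0 \<le> b" "0 \<le> c" "0 \<le> d"
  shows "a * (c * min 1 (b / a * (d / c))) = b * (d * min 1 (a / b * (c / d)))"
proof (cases "a * c = 0 \<or> b * d = 0")
  case True
  then show ?thesis using assms by auto
next
  case False
  then have "a > 0" "b > 0" "c > 0" "d > 0" using assms by auto
  then show ?thesis
    by (auto simp: min_def field_simps mult.commute mult.left_commute)
qed

locale mhs =
  fixes M :: "'a measure" and D :: "'z measure"
    and \<pi> :: "'a \<Rightarrow> real" and P :: "'a \<Rightarrow> 'a \<Rightarrow> 'z \<Rightarrow> real" and T :: nat
  assumes M: "sigma_finite_measure M"
    and D: "prob_space D"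
    and pi_meas: "\<pi> \<in> borel_measurable M"
    and pi_nonneg: "\<And>x. x \<in> space M \<Longrightarrow> 0 \<le> \<pi> x"
    and P_meas: "(\<lambda>(x, y, z). P x y z) \<in> borel_measurable (M \<Otimes>\<^sub>M M \<Otimes>\<^sub>M D)"
    and P_nonneg: "\<And>x y z. x \<in> space M \<Longrightarrow> y \<in> space M \<Longrightarrow> z \<in> space D \<Longrightarrow> 0 \<le> P x y z"
    and P_prob: "\<And>x z. x \<in> space M \<Longrightarrow> z \<in> space D \<Longrightarrow> (\<integral>\<^sup>+ y. ennreal (P x y z) \<partial>M) = 1"
    and T: "1 \<le> T"
begin

abbreviation "XSp \<equiv> PiM {1..<T} (\<lambda>_. M)"
abbreviation "ZSp \<equiv> PiM {..<T} (\<lambda>_. D)"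
abbreviation "WF x y xs zs \<equiv> path_weight P T x (xs(T := y)) zs"
abbreviation "AC x y xs zs \<equiv> accept_prob \<pi> P T x (xs(T := y)) zs"

lemma D_sf: "sigma_finite_measure D"
  using D by (simp add: prob_space_imp_sigma_finite)

lemma sfXS: "sigma_finite_measure XSp"
proof -
  interpret product_sigma_finite "\<lambda>_. M" using M by (simp add: product_sigma_finite_def)
  show ?thesis by (rule sigma_finite) simp
qed

lemma sfZS: "sigma_finite_measure ZSp"
proof -
  interpret product_sigma_finite "\<lambda>_. D" using D_sf by (simp add: product_sigma_finite_def)
  show ?thesis by (rule sigma_finite) simp
qed

lemma meas_path:
  assumes fx: "fx \<in> measurable N M" and fy: "fy \<in> measurable N M" and fxs: "fxs \<in> measurable N XSp"
    and t: "t \<le> T"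
  shows "(\<lambda>\<omega>. mc_path (fx \<omega>) ((fxs \<omega>)(T := fy \<omega>)) t) \<in> measurable N M"
proof -
  consider "t = 0" | "t = T" | "t \<in> {1..<T}" using t T by force
  then show ?thesis
  proof cases
    case 1 then show ?thesis using fx T by (simp add: mc_path_def)
  next
    case 2 then show ?thesis using fy T by (simp add: mc_path_def)
  next
    case 3
    then have "(\<lambda>\<omega>. mc_path (fx \<omega>) ((fxs \<omega>)(T := fy \<omega>)) t) = (\<lambda>\<omega>. fxs \<omega> t)"
      by (auto simp: mc_path_def)
    moreover have "(\<lambda>\<omega>. fxs \<omega> t) \<in> measurable N M"
      using measurable_compose[OF fxs measurable_component_singleton[OF 3]] by simp
    ultimately show ?thesis by simp
  qed
qed

lemma meas_zs:
  assumes fzs: "fzs \<in> measurable N ZSp" and t: "t < T"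
  shows "(\<lambda>\<omega>. fzs \<omega> t) \<in> measurable N D"
  using measurable_compose[OF fzs measurable_component_singleton[of t "{..<T}"]] t by simp

lemma meas_P:
  assumes a: "a \<in> measurable N M" and b: "b \<in> measurable N M" and c: "c \<in> measurable N D"
  shows "(\<lambda>\<omega>. P (a \<omega>) (b \<omega>) (c \<omega>)) \<in> borel_measurable N"
proof -
  have "(\<lambda>\<omega>. (a \<omega>, b \<omega>, c \<omega>)) \<in> measurable N (M \<Otimes>\<^sub>M M \<Otimes>\<^sub>M D)"
    using a b c by (intro measurable_Pair) auto
  from measurable_compose[OF this P_meas] show ?thesis by simp
qed

lemma meas_WF_AC:
  assumes fx: "fx \<in> measurable N M" and fy: "fy \<in> measurable N M" and fxs: "fxs \<in> measurable N XSp"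
    and fzs: "fzs \<in> measurable N ZSp"
  shows "(\<lambda>\<omega>. WF (fx \<omega>) (fy \<omega>) (fxs \<omega>) (fzs \<omega>)) \<in> borel_measurable N"
    and "(\<lambda>\<omega>. AC (fx \<omega>) (fy \<omega>) (fxs \<omega>) (fzs \<omega>)) \<in> borel_measurable N"
proof -
  have fw: "(\<lambda>\<omega>. P (mc_path (fx \<omega>) ((fxs \<omega>)(T := fy \<omega>)) t) (mc_path (fx \<omega>) ((fxs \<omega>)(T := fy \<omega>)) (Suc t)) (fzs \<omega> t))
     \<in> borel_measurable N" if "t < T" for t
    using that by (intro meas_P meas_path meas_zs fx fy fxs fzs) auto
  have bw: "(\<lambda>\<omega>. P (mc_path (fx \<omega>) ((fxs \<omega>)(T := fy \<omega>)) (Suc t)) (mc_path (fx \<omega>) ((fxs \<omega>)(T := fy \<omega>)) t) (fzs \<omega> t))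
     \<in> borel_measurable N" if "t < T" for t
    using that by (intro meas_P meas_path meas_zs fx fy fxs fzs) auto
  show "(\<lambda>\<omega>. WF (fx \<omega>) (fy \<omega>) (fxs \<omega>) (fzs \<omega>)) \<in> borel_measurable N"
    unfolding path_weight_def by (rule borel_measurable_prod) (use fw in auto)
  have piy: "(\<lambda>\<omega>. \<pi> (fy \<omega>)) \<in> borel_measurable N"
    using measurable_compose[OF fy pi_meas] .
  have pix: "(\<lambda>\<omega>. \<pi> (fx \<omega>)) \<in> borel_measurable N"
    using measurable_compose[OF fx pi_meas] .
  have pr: "(\<lambda>\<omega>. \<Prod>t<T. P (mc_path (fx \<omega>) ((fxs \<omega>)(T := fy \<omega>)) (Suc t)) (mc_path (fx \<omega>) ((fxs \<omega>)(T := fy \<omega>)) t) (fzs \<omega> t)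
      / P (mc_path (fx \<omega>) ((fxs \<omega>)(T := fy \<omega>)) t) (mc_path (fx \<omega>) ((fxs \<omega>)(T := fy \<omega>)) (Suc t)) (fzs \<omega> t))
     \<in> borel_measurable N"
    by (rule borel_measurable_prod) (use fw bw in auto)
  show "(\<lambda>\<omega>. AC (fx \<omega>) (fy \<omega>) (fxs \<omega>) (fzs \<omega>)) \<in> borel_measurable N"
    unfolding accept_prob_def using piy pix pr by simp measurable
qed


definition rx :: "(nat \<Rightarrow> 'a) \<Rightarrow> nat \<Rightarrow> 'a" where "rx xs = (\<lambda>t\<in>{1..<T}. xs (T - t))"
definition rz :: "(nat \<Rightarrow> 'z) \<Rightarrow> nat \<Rightarrow> 'z" where "rz zs = (\<lambda>t\<in>{..<T}. zs (T - Suc t))"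

lemma pointwise:
  assumes x: "x \<in> space M" and y: "y \<in> space M" and xs: "xs \<in> space XSp" and zs: "zs \<in> space ZSp"
  shows "\<pi> x * (WF x y xs zs * AC x y xs zs) = \<pi> y * (WF y x (rx xs) (rz zs) * AC y x (rx xs) (rz zs))"
proof -
  define p where "p t = mc_path x (xs(T:=y)) t" for t
  have pq: "mc_path y ((rx xs)(T:=x)) t = p (T - t)" if "t \<le> T" for t
    using that T by (auto simp: p_def mc_path_def rx_def)
  have psp: "p t \<in> space M" if "t \<le> T" for t
    using that T x y xs by (auto simp: p_def mc_path_def space_PiM PiE_iff)
  have zsp: "zs t \<in> space D" if "t < T" for t
    using that zs by (auto simp: space_PiM PiE_iff)
  define Wf where "Wf = (\<Prod>t<T. P (p t) (p (Suc t)) (zs t))"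
  define Wb where "Wb = (\<Prod>t<T. P (p (Suc t)) (p t) (zs t))"
  have e1: "WF x y xs zs = Wf" unfolding path_weight_def Wf_def p_def ..
  have e2: "WF y x (rx xs) (rz zs) = Wb"
  proof -
    have "WF y x (rx xs) (rz zs) = (\<Prod>t<T. P (p (Suc (T - Suc t))) (p (T - Suc t)) (zs (T - Suc t)))"
      unfolding path_weight_def
      by (rule prod.cong) (auto simp: pq rz_def Suc_diff_Suc)
    also have "\<dots> = Wb" unfolding Wb_def by (rule prod.nat_diff_reindex)
    finally show ?thesis .
  qed
  have e3: "AC x y xs zs = min 1 (\<pi> y / \<pi> x * (Wb / Wf))"
    unfolding accept_prob_def Wb_def Wf_def p_def prod_dividef by simp
  have e4: "AC y x (rx xs) (rz zs) = min 1 (\<pi> x / \<pi> y * (Wf / Wb))"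
  proof -
    have "(\<Prod>t<T. P (mc_path y ((rx xs)(T:=x)) (Suc t)) (mc_path y ((rx xs)(T:=x)) t) (rz zs t)
               / P (mc_path y ((rx xs)(T:=x)) t) (mc_path y ((rx xs)(T:=x)) (Suc t)) (rz zs t))
        = (\<Prod>t<T. P (p (T - Suc t)) (p (Suc (T - Suc t))) (zs (T - Suc t)) / P (p (Suc (T - Suc t))) (p (T - Suc t)) (zs (T - Suc t)))"
      by (rule prod.cong) (auto simp: pq rz_def Suc_diff_Suc)
    also have "\<dots> = (\<Prod>t<T. P (p t) (p (Suc t)) (zs t) / P (p (Suc t)) (p t) (zs t))"
      by (rule prod.nat_diff_reindex[where g="\<lambda>t. P (p t) (p (Suc t)) (zs t) / P (p (Suc t)) (p t) (zs t)"])
    also have "\<dots> = Wf / Wb" unfolding Wf_def Wb_def prod_dividef ..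
    finally show ?thesis unfolding accept_prob_def using T by simp
  qed
  have "0 \<le> Wf" unfolding Wf_def using psp zsp P_nonneg by (intro prod_nonneg) auto
  moreover have "0 \<le> Wb" unfolding Wb_def using psp zsp P_nonneg by (intro prod_nonneg) auto
  ultimately show ?thesis unfolding e1 e2 e3 e4
    using real_db pi_nonneg x y by simp
qed

lemma XSp_mem: "xs \<in> space XSp \<Longrightarrow> t \<in> {1..<T} \<Longrightarrow> xs t \<in> space M"
  by (auto simp: space_PiM)

lemma rx_meas: "rx \<in> measurable XSp XSp"
  unfolding rx_def[abs_def]
  by (rule measurable_restrict) (auto intro!: measurable_component_singleton)

lemma rz_meas: "rz \<in> measurable ZSp ZSp"
  unfolding rz_def[abs_def]
  by (rule measurable_restrict) (auto intro!: measurable_component_singleton)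

lemma rx_distr: "distr XSp XSp rx = XSp"
  unfolding rx_def[abs_def] by (rule PiM_reindex_invol[OF M]) auto

lemma rz_distr: "distr ZSp ZSp rz = ZSp"
  unfolding rz_def[abs_def] by (rule PiM_reindex_invol[OF D_sf]) auto

lemma swap_rev:
  assumes g: "(\<lambda>(zs, xs). g xs zs) \<in> borel_measurable (ZSp \<Otimes>\<^sub>M XSp)"
  shows "(\<integral>\<^sup>+ zs. (\<integral>\<^sup>+ xs. g (rx xs) (rz zs) \<partial>XSp) \<partial>ZSp) = (\<integral>\<^sup>+ zs. (\<integral>\<^sup>+ xs. g xs zs \<partial>XSp) \<partial>ZSp)"
proof -
  interpret XS: sigma_finite_measure XSp by (rule sfXS)
  have gz: "(\<lambda>xs. g xs z) \<in> borel_measurable XSp" if "z \<in> space ZSp" for z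
    using measurable_Pair2[OF g that] by simp
  have h: "(\<lambda>z. \<integral>\<^sup>+ xs. g xs z \<partial>XSp) \<in> borel_measurable ZSp"
    by (rule XS.borel_measurable_nn_integral) (use g in \<open>simp add: case_prod_beta\<close>)
  have "(\<integral>\<^sup>+ zs. (\<integral>\<^sup>+ xs. g (rx xs) (rz zs) \<partial>XSp) \<partial>ZSp) = (\<integral>\<^sup>+ zs. (\<integral>\<^sup>+ xs. g xs (rz zs) \<partial>XSp) \<partial>ZSp)"
  proof (rule nn_integral_cong)
    fix zs assume "zs \<in> space ZSp"
    then have "rz zs \<in> space ZSp" using measurable_space[OF rz_meas] by auto
    then have "(\<lambda>xs. g xs (rz zs)) \<in> borel_measurable (distr XSp XSp rx)"
      using gz by (simp add: rx_distr)
    from nn_integral_distr[OF rx_meas this] rx_distr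
    show "(\<integral>\<^sup>+ xs. g (rx xs) (rz zs) \<partial>XSp) = (\<integral>\<^sup>+ xs. g xs (rz zs) \<partial>XSp)"
      by simp
  qed
  also have "\<dots> = (\<integral>\<^sup>+ zs. (\<integral>\<^sup>+ xs. g xs zs \<partial>XSp) \<partial>ZSp)"
  proof -
    have "(\<lambda>z. \<integral>\<^sup>+ xs. g xs z \<partial>XSp) \<in> borel_measurable (distr ZSp ZSp rz)"
      using h by (simp add: rz_distr)
    from nn_integral_distr[OF rz_meas this] rz_distr show ?thesis by simp
  qed
  finally show ?thesis .
qed

lemma meas_F:
  assumes fx: "fx \<in> measurable N M" and fy: "fy \<in> measurable N M" and fxs: "fxs \<in> measurable N XSp"
    and fzs: "fzs \<in> measurable N ZSp"
  shows "(\<lambda>\<omega>. ennreal (c * (WF (fx \<omega>) (fy \<omega>) (fxs \<omega>) (fzs \<omega>) * AC (fx \<omega>) (fy \<omega>) (fxs \<omega>) (fzs \<omega>)))) \<in> borel_measurable N"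
  using meas_WF_AC[OF assms] by measurable

lemma meas_F2:
  assumes "x \<in> space M" "y \<in> space M"
  shows "(\<lambda>(zs, xs). ennreal (c * (WF x y xs zs * AC x y xs zs))) \<in> borel_measurable (ZSp \<Otimes>\<^sub>M XSp)"
  using meas_F[of "\<lambda>_. x" "ZSp \<Otimes>\<^sub>M XSp" "\<lambda>_. y" snd fst c] assms
  by (simp add: case_prod_beta)

lemma dens_cmult:
  assumes x: "x \<in> space M" and y: "y \<in> space M" and c: "0 \<le> c"
  shows "ennreal c * mh_density M D \<pi> P T x y = (\<integral>\<^sup>+ zs. (\<integral>\<^sup>+ xs. ennreal (c * (WF x y xs zs * AC x y xs zs)) \<partial>XSp) \<partial>ZSp)"
proof -
  interpret XS: sigma_finite_measure XSp by (rule sfXS)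
  have g: "(\<lambda>(zs, xs). ennreal (1 * (WF x y xs zs * AC x y xs zs))) \<in> borel_measurable (ZSp \<Otimes>\<^sub>M XSp)"
    by (rule meas_F2[OF x y])
  have h: "(\<lambda>zs. \<integral>\<^sup>+ xs. ennreal (WF x y xs zs * AC x y xs zs) \<partial>XSp) \<in> borel_measurable ZSp"
    by (rule XS.borel_measurable_nn_integral) (use g in \<open>simp add: case_prod_beta\<close>)
  have gz: "(\<lambda>xs. ennreal (WF x y xs zs * AC x y xs zs)) \<in> borel_measurable XSp" if "zs \<in> space ZSp" for zs
    using measurable_Pair2[OF g that] by simp
  show ?thesis
    unfolding mh_density_def
    apply (subst nn_integral_cmult[OF h, symmetric])
    apply (rule nn_integral_cong)
    apply (subst nn_integral_cmult[OF gz, symmetric], assumption)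
    apply (rule nn_integral_cong)
    using c by (simp add: ennreal_mult')
qed

lemma dens_db:
  assumes x: "x \<in> space M" and y: "y \<in> space M"
  shows "ennreal (\<pi> x) * mh_density M D \<pi> P T x y = ennreal (\<pi> y) * mh_density M D \<pi> P T y x"
proof -
  have "ennreal (\<pi> x) * mh_density M D \<pi> P T x y
      = (\<integral>\<^sup>+ zs. (\<integral>\<^sup>+ xs. ennreal (\<pi> x * (WF x y xs zs * AC x y xs zs)) \<partial>XSp) \<partial>ZSp)"
    by (rule dens_cmult[OF x y pi_nonneg[OF x]])
  also have "\<dots> = (\<integral>\<^sup>+ zs. (\<integral>\<^sup>+ xs. ennreal (\<pi> y * (WF y x (rx xs) (rz zs) * AC y x (rx xs) (rz zs))) \<partial>XSp) \<partial>ZSp)"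
    by (intro nn_integral_cong) (simp add: pointwise x y)
  also have "\<dots> = (\<integral>\<^sup>+ zs. (\<integral>\<^sup>+ xs. ennreal (\<pi> y * (WF y x xs zs * AC y x xs zs)) \<partial>XSp) \<partial>ZSp)"
    by (rule swap_rev[where g="\<lambda>xs zs. ennreal (\<pi> y * (WF y x xs zs * AC y x xs zs))"])
       (rule meas_F2[OF y x])
  also have "\<dots> = ennreal (\<pi> y) * mh_density M D \<pi> P T y x"
    by (rule dens_cmult[OF y x pi_nonneg[OF y], symmetric])
  finally show ?thesis .
qed

lemma meas_WF_r[measurable (raw)]:
  assumes "fx \<in> measurable N M" "fy \<in> measurable N M" "fxs \<in> measurable N XSp" "fzs \<in> measurable N ZSp"
  shows "(\<lambda>\<omega>. path_weight P T (fx \<omega>) ((fxs \<omega>)(T := fy \<omega>)) (fzs \<omega>)) \<in> borel_measurable N"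
  using meas_WF_AC(1)[OF assms] .

lemma meas_AC_r[measurable (raw)]:
  assumes "fx \<in> measurable N M" "fy \<in> measurable N M" "fxs \<in> measurable N XSp" "fzs \<in> measurable N ZSp"
  shows "(\<lambda>\<omega>. accept_prob \<pi> P T (fx \<omega>) ((fxs \<omega>)(T := fy \<omega>)) (fzs \<omega>)) \<in> borel_measurable N"
  using meas_WF_AC(2)[OF assms] .


abbreviation "XT \<equiv> PiM {1..T} (\<lambda>_. M)"

lemma meas_path1:
  assumes fx: "fx \<in> measurable N M" and fxs: "fxs \<in> measurable N XT" and t: "t \<le> T"
  shows "(\<lambda>\<omega>. mc_path (fx \<omega>) (fxs \<omega>) t) \<in> measurable N M"
proof (cases "t = 0")
  case True then show ?thesis using fx by (simp add: mc_path_def)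
next
  case False
  then have t1: "t \<in> {1..T}" using t by auto
  have "(\<lambda>\<omega>. mc_path (fx \<omega>) (fxs \<omega>) t) = (\<lambda>\<omega>. fxs \<omega> t)"
    using False by (auto simp: mc_path_def)
  moreover have "(\<lambda>\<omega>. fxs \<omega> t) \<in> measurable N M"
    using measurable_compose[OF fxs measurable_component_singleton[OF t1]] by simp
  ultimately show ?thesis by simp
qed

lemma meas_WF_AC1:
  assumes fx: "fx \<in> measurable N M" and fxs: "fxs \<in> measurable N XT"
    and fzs: "fzs \<in> measurable N ZSp"
  shows "(\<lambda>\<omega>. path_weight P T (fx \<omega>) (fxs \<omega>) (fzs \<omega>)) \<in> borel_measurable N"
    and "(\<lambda>\<omega>. accept_prob \<pi> P T (fx \<omega>) (fxs \<omega>) (fzs \<omega>)) \<in> borel_measurable N"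
proof -
  have fw: "(\<lambda>\<omega>. P (mc_path (fx \<omega>) (fxs \<omega>) t) (mc_path (fx \<omega>) (fxs \<omega>) (Suc t)) (fzs \<omega> t))
     \<in> borel_measurable N" if "t < T" for t
    using that by (intro meas_P meas_path1 meas_zs fx fxs fzs) auto
  have bw: "(\<lambda>\<omega>. P (mc_path (fx \<omega>) (fxs \<omega>) (Suc t)) (mc_path (fx \<omega>) (fxs \<omega>) t) (fzs \<omega> t))
     \<in> borel_measurable N" if "t < T" for t
    using that by (intro meas_P meas_path1 meas_zs fx fxs fzs) auto
  show "(\<lambda>\<omega>. path_weight P T (fx \<omega>) (fxs \<omega>) (fzs \<omega>)) \<in> borel_measurable N"
    unfolding path_weight_def by (rule borel_measurable_prod) (use fw in auto)
  have "(\<lambda>\<omega>. fxs \<omega> T) \<in> measurable N M"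
    using measurable_compose[OF fxs measurable_component_singleton[of T "{1..T}"]] T by simp
  then have piy: "(\<lambda>\<omega>. \<pi> (fxs \<omega> T)) \<in> borel_measurable N"
    using measurable_compose[OF _ pi_meas] by blast
  have pix: "(\<lambda>\<omega>. \<pi> (fx \<omega>)) \<in> borel_measurable N"
    using measurable_compose[OF fx pi_meas] .
  have pr: "(\<lambda>\<omega>. \<Prod>t<T. P (mc_path (fx \<omega>) (fxs \<omega>) (Suc t)) (mc_path (fx \<omega>) (fxs \<omega>) t) (fzs \<omega> t)
      / P (mc_path (fx \<omega>) (fxs \<omega>) t) (mc_path (fx \<omega>) (fxs \<omega>) (Suc t)) (fzs \<omega> t))
     \<in> borel_measurable N"
    by (rule borel_measurable_prod) (use fw bw in auto)
  show "(\<lambda>\<omega>. accept_prob \<pi> P T (fx \<omega>) (fxs \<omega>) (fzs \<omega>)) \<in> borel_measurable N"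
    unfolding accept_prob_def using piy pix pr by simp measurable
qed

lemma ZSp_mem: "zs \<in> space ZSp \<Longrightarrow> t < T \<Longrightarrow> zs t \<in> space D"
  by (auto simp: space_PiM)

lemma bounds:
  assumes x: "x \<in> space M" and y: "y \<in> space M" and xs: "xs \<in> space XSp" and zs: "zs \<in> space ZSp"
  shows "0 \<le> WF x y xs zs" "0 \<le> AC x y xs zs" "AC x y xs zs \<le> 1"
proof -
  have psp: "mc_path x (xs(T:=y)) t \<in> space M" if "t \<le> T" for t
    using that T x y XSp_mem[OF xs] by (auto simp: mc_path_def)
  show "0 \<le> WF x y xs zs" unfolding path_weight_def
    using psp ZSp_mem[OF zs] P_nonneg by (intro prod_nonneg) auto
  have "0 \<le> \<pi> ((xs(T:=y)) T) / \<pi> x *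
       (\<Prod>t<T. P (mc_path x (xs(T:=y)) (Suc t)) (mc_path x (xs(T:=y)) t) (zs t)
               / P (mc_path x (xs(T:=y)) t) (mc_path x (xs(T:=y)) (Suc t)) (zs t))"
    using psp ZSp_mem[OF zs] P_nonneg pi_nonneg x y
    by (intro mult_nonneg_nonneg divide_nonneg_nonneg prod_nonneg) auto
  then show "0 \<le> AC x y xs zs" unfolding accept_prob_def by simp
  show "AC x y xs zs \<le> 1" unfolding accept_prob_def by simp
qed

end

context mhs begin


lemma kernel_expand:
  assumes x: "x \<in> space M" and B: "B \<in> sets M"
  shows "mh_kernel M D \<pi> P T x B =
     (\<integral>\<^sup>+zs. \<integral>\<^sup>+xs. \<integral>\<^sup>+y. ennreal (WF x y xs zs * AC x y xs zs) * indicator B y \<partial>M \<partial>XSp \<partial>ZSp)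
     + indicator B x * (\<integral>\<^sup>+zs. \<integral>\<^sup>+xs. \<integral>\<^sup>+y. ennreal (WF x y xs zs * (1 - AC x y xs zs)) \<partial>M \<partial>XSp \<partial>ZSp)"
proof -
  interpret Mi: sigma_finite_measure M by (rule M)
  interpret Xi: sigma_finite_measure XSp by (rule sfXS)
  interpret Zi: sigma_finite_measure ZSp by (rule sfZS)
  interpret PS: product_sigma_finite "\<lambda>_. M" using M by (simp add: product_sigma_finite_def)
  note [measurable] = x B
  have ins: "{1..T} = insert T {1..<T}" using T by auto
  have step1: "(\<integral>\<^sup>+ xs. ennreal (path_weight P T x xs zs) *
         (ennreal (accept_prob \<pi> P T x xs zs) * indicator B (xs T)
          + ennreal (1 - accept_prob \<pi> P T x xs zs) * indicator B x) \<partial>XT)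
     = (\<integral>\<^sup>+xs. \<integral>\<^sup>+y. ennreal (WF x y xs zs * AC x y xs zs) * indicator B y
          + indicator B x * ennreal (WF x y xs zs * (1 - AC x y xs zs)) \<partial>M \<partial>XSp)"
    if zs: "zs \<in> space ZSp" for zs
  proof -
    note [measurable] = zs
    have m1: "(\<lambda>xs. path_weight P T x xs zs) \<in> borel_measurable XT"
      using meas_WF_AC1(1)[OF measurable_const[OF x] measurable_ident_sets[OF refl] measurable_const[OF zs]] .
    have m2: "(\<lambda>xs. accept_prob \<pi> P T x xs zs) \<in> borel_measurable XT"
      using meas_WF_AC1(2)[OF measurable_const[OF x] measurable_ident_sets[OF refl] measurable_const[OF zs]] .
    have m3: "(\<lambda>xs. xs T) \<in> measurable XT M"
      using T by (intro measurable_component_singleton) auto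
    note [measurable] = m1 m2 m3
    have m4: "(\<lambda>xs. ennreal (path_weight P T x xs zs) *
         (ennreal (accept_prob \<pi> P T x xs zs) * indicator B (xs T)
          + ennreal (1 - accept_prob \<pi> P T x xs zs) * indicator B x)) \<in> borel_measurable XT"
      by measurable
    have "(\<integral>\<^sup>+ xs. ennreal (path_weight P T x xs zs) *
         (ennreal (accept_prob \<pi> P T x xs zs) * indicator B (xs T)
          + ennreal (1 - accept_prob \<pi> P T x xs zs) * indicator B x) \<partial>XT)
        = (\<integral>\<^sup>+xs. \<integral>\<^sup>+y. ennreal (WF x y xs zs) *
         (ennreal (AC x y xs zs) * indicator B y
          + ennreal (1 - AC x y xs zs) * indicator B x) \<partial>M \<partial>XSp)"
      using T m4 unfolding ins
      by (subst PS.product_nn_integral_insert) (auto intro!: nn_integral_cong)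
    also have "\<dots> = (\<integral>\<^sup>+xs. \<integral>\<^sup>+y. ennreal (WF x y xs zs * AC x y xs zs) * indicator B y
          + indicator B x * ennreal (WF x y xs zs * (1 - AC x y xs zs)) \<partial>M \<partial>XSp)"
    proof (intro nn_integral_cong)
      fix xs y assume xs: "xs \<in> space XSp" and y: "y \<in> space M"
      note bd = bounds[OF x y xs zs]
      show "ennreal (WF x y xs zs) * (ennreal (AC x y xs zs) * indicator B y + ennreal (1 - AC x y xs zs) * indicator B x)
         = ennreal (WF x y xs zs * AC x y xs zs) * indicator B y + indicator B x * ennreal (WF x y xs zs * (1 - AC x y xs zs))"
        using bd by (simp add: ennreal_mult distrib_left mult_ac)
    qed
    finally show ?thesis .
  qed
  have L: "(\<integral>\<^sup>+y. a y + c * b y \<partial>N) = integral\<^sup>N N a + c * integral\<^sup>N N b"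
    if "a \<in> borel_measurable N" "b \<in> borel_measurable N" for a b :: "_ \<Rightarrow> ennreal" and c N
    using that by (simp add: nn_integral_add nn_integral_cmult)
  have "mh_kernel M D \<pi> P T x B = (\<integral>\<^sup>+zs. \<integral>\<^sup>+xs. \<integral>\<^sup>+y. ennreal (WF x y xs zs * AC x y xs zs) * indicator B y
          + indicator B x * ennreal (WF x y xs zs * (1 - AC x y xs zs)) \<partial>M \<partial>XSp \<partial>ZSp)"
    unfolding mh_kernel_def by (rule nn_integral_cong) (rule step1)
  also have "\<dots> = (\<integral>\<^sup>+zs. \<integral>\<^sup>+xs. (\<integral>\<^sup>+y. ennreal (WF x y xs zs * AC x y xs zs) * indicator B y \<partial>M)
          + indicator B x * (\<integral>\<^sup>+y. ennreal (WF x y xs zs * (1 - AC x y xs zs)) \<partial>M) \<partial>XSp \<partial>ZSp)"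
  proof (intro nn_integral_cong L)
    fix zs xs assume [measurable]: "zs \<in> space ZSp" "xs \<in> space XSp"
    show "(\<lambda>y. ennreal (WF x y xs zs * AC x y xs zs) * indicator B y) \<in> borel_measurable M" by measurable
    show "(\<lambda>y. ennreal (WF x y xs zs * (1 - AC x y xs zs))) \<in> borel_measurable M" by measurable
  qed
  also have "\<dots> = (\<integral>\<^sup>+zs. (\<integral>\<^sup>+xs. \<integral>\<^sup>+y. ennreal (WF x y xs zs * AC x y xs zs) * indicator B y \<partial>M \<partial>XSp)
          + indicator B x * (\<integral>\<^sup>+xs. \<integral>\<^sup>+y. ennreal (WF x y xs zs * (1 - AC x y xs zs)) \<partial>M \<partial>XSp) \<partial>ZSp)"
  proof (intro nn_integral_cong L)
    fix zs assume [measurable]: "zs \<in> space ZSp"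
    show "(\<lambda>xs. \<integral>\<^sup>+y. ennreal (WF x y xs zs * AC x y xs zs) * indicator B y \<partial>M) \<in> borel_measurable XSp" by measurable
    show "(\<lambda>xs. \<integral>\<^sup>+y. ennreal (WF x y xs zs * (1 - AC x y xs zs)) \<partial>M) \<in> borel_measurable XSp" by measurable
  qed
  also have "\<dots> = (\<integral>\<^sup>+zs. \<integral>\<^sup>+xs. \<integral>\<^sup>+y. ennreal (WF x y xs zs * AC x y xs zs) * indicator B y \<partial>M \<partial>XSp \<partial>ZSp)
     + indicator B x * (\<integral>\<^sup>+zs. \<integral>\<^sup>+xs. \<integral>\<^sup>+y. ennreal (WF x y xs zs * (1 - AC x y xs zs)) \<partial>M \<partial>XSp \<partial>ZSp)"
    by (rule L) measurable
  finally show ?thesis .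
qed


abbreviation "dens x y \<equiv> mh_density M D \<pi> P T x y"
abbreviation "Rej x \<equiv> (\<integral>\<^sup>+zs. \<integral>\<^sup>+xs. \<integral>\<^sup>+y. ennreal (WF x y xs zs * (1 - AC x y xs zs)) \<partial>M \<partial>XSp \<partial>ZSp)"

lemma acc_dens:
  assumes x: "x \<in> space M" and B: "B \<in> sets M"
  shows "(\<integral>\<^sup>+zs. \<integral>\<^sup>+xs. \<integral>\<^sup>+y. ennreal (WF x y xs zs * AC x y xs zs) * indicator B y \<partial>M \<partial>XSp \<partial>ZSp)
       = (\<integral>\<^sup>+y. dens x y * indicator B y \<partial>M)"
proof -
  interpret Mi: sigma_finite_measure M by (rule M)
  interpret Xi: sigma_finite_measure XSp by (rule sfXS)
  interpret Zi: sigma_finite_measure ZSp by (rule sfZS)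
  interpret MX: pair_sigma_finite M XSp by (intro pair_sigma_finite.intro M sfXS)
  interpret MZ: pair_sigma_finite M ZSp by (intro pair_sigma_finite.intro M sfZS)
  note [measurable] = x B
  have "(\<integral>\<^sup>+zs. \<integral>\<^sup>+xs. \<integral>\<^sup>+y. ennreal (WF x y xs zs * AC x y xs zs) * indicator B y \<partial>M \<partial>XSp \<partial>ZSp)
      = (\<integral>\<^sup>+zs. \<integral>\<^sup>+y. \<integral>\<^sup>+xs. ennreal (WF x y xs zs * AC x y xs zs) * indicator B y \<partial>XSp \<partial>M \<partial>ZSp)"
  proof (rule nn_integral_cong)
    fix zs assume [measurable]: "zs \<in> space ZSp"
    show "(\<integral>\<^sup>+xs. \<integral>\<^sup>+y. ennreal (WF x y xs zs * AC x y xs zs) * indicator B y \<partial>M \<partial>XSp)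
      = (\<integral>\<^sup>+y. \<integral>\<^sup>+xs. ennreal (WF x y xs zs * AC x y xs zs) * indicator B y \<partial>XSp \<partial>M)"
      by (rule MX.Fubini'[of "\<lambda>y xs. ennreal (WF x y xs zs * AC x y xs zs) * indicator B y"]) measurable
  qed
  also have "\<dots> = (\<integral>\<^sup>+y. \<integral>\<^sup>+zs. \<integral>\<^sup>+xs. ennreal (WF x y xs zs * AC x y xs zs) * indicator B y \<partial>XSp \<partial>ZSp \<partial>M)"
    by (rule MZ.Fubini'[of "\<lambda>y zs. \<integral>\<^sup>+xs. ennreal (WF x y xs zs * AC x y xs zs) * indicator B y \<partial>XSp"]) measurable
  also have "\<dots> = (\<integral>\<^sup>+y. dens x y * indicator B y \<partial>M)"
  proof (rule nn_integral_cong)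
    fix y assume [measurable]: "y \<in> space M"
    have "(\<integral>\<^sup>+zs. \<integral>\<^sup>+xs. ennreal (WF x y xs zs * AC x y xs zs) * indicator B y \<partial>XSp \<partial>ZSp)
        = (\<integral>\<^sup>+zs. (\<integral>\<^sup>+xs. ennreal (WF x y xs zs * AC x y xs zs) \<partial>XSp) * indicator B y \<partial>ZSp)"
    proof (rule nn_integral_cong)
      fix zs assume [measurable]: "zs \<in> space ZSp"
      show "(\<integral>\<^sup>+xs. ennreal (WF x y xs zs * AC x y xs zs) * indicator B y \<partial>XSp)
          = (\<integral>\<^sup>+xs. ennreal (WF x y xs zs * AC x y xs zs) \<partial>XSp) * indicator B y"
        by (rule nn_integral_multc) measurable
    qed
    also have "\<dots> = dens x y * indicator B y"
      unfolding mh_density_def by (rule nn_integral_multc) measurable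
    finally show "(\<integral>\<^sup>+zs. \<integral>\<^sup>+xs. ennreal (WF x y xs zs * AC x y xs zs) * indicator B y \<partial>XSp \<partial>ZSp)
        = dens x y * indicator B y" .
  qed
  finally show ?thesis .
qed

lemma dens_meas: "(\<lambda>(x, y). dens x y) \<in> borel_measurable (M \<Otimes>\<^sub>M M)"
proof -
  interpret Xi: sigma_finite_measure XSp by (rule sfXS)
  interpret Zi: sigma_finite_measure ZSp by (rule sfZS)
  show ?thesis unfolding mh_density_def by measurable
qed

lemma Rej_meas: "(\<lambda>x. Rej x) \<in> borel_measurable M"
proof -
  interpret Mi: sigma_finite_measure M by (rule M)
  interpret Xi: sigma_finite_measure XSp by (rule sfXS)
  interpret Zi: sigma_finite_measure ZSp by (rule sfZS)
  show ?thesis by measurable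
qed

lemma decomp:
  assumes A: "A \<in> sets M" and B: "B \<in> sets M"
  shows "(\<integral>\<^sup>+ x\<in>A. ennreal (\<pi> x) * mh_kernel M D \<pi> P T x B \<partial>M)
     = (\<integral>\<^sup>+x. \<integral>\<^sup>+y. ennreal (\<pi> x) * dens x y * indicator A x * indicator B y \<partial>M \<partial>M)
     + (\<integral>\<^sup>+x. ennreal (\<pi> x) * Rej x * indicator A x * indicator B x \<partial>M)"
proof -
  interpret Mi: sigma_finite_measure M by (rule M)
  note [measurable] = A B dens_meas Rej_meas pi_meas
  have "(\<integral>\<^sup>+ x\<in>A. ennreal (\<pi> x) * mh_kernel M D \<pi> P T x B \<partial>M)
     = (\<integral>\<^sup>+x. (\<integral>\<^sup>+y. ennreal (\<pi> x) * dens x y * indicator A x * indicator B y \<partial>M)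
        + ennreal (\<pi> x) * Rej x * indicator A x * indicator B x \<partial>M)"
  proof (rule nn_integral_cong)
    fix x assume x[measurable]: "x \<in> space M"
    have "(\<integral>\<^sup>+y. ennreal (\<pi> x) * dens x y * indicator A x * indicator B y \<partial>M)
        = (\<integral>\<^sup>+y. (ennreal (\<pi> x) * indicator A x) * (dens x y * indicator B y) \<partial>M)"
      by (simp add: mult_ac)
    also have "\<dots> = (ennreal (\<pi> x) * indicator A x) * (\<integral>\<^sup>+y. dens x y * indicator B y \<partial>M)"
      by (rule nn_integral_cmult) measurable
    finally have e: "(\<integral>\<^sup>+y. ennreal (\<pi> x) * dens x y * indicator A x * indicator B y \<partial>M)
       = (ennreal (\<pi> x) * indicator A x) * (\<integral>\<^sup>+y. dens x y * indicator B y \<partial>M)" .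
    show "ennreal (\<pi> x) * mh_kernel M D \<pi> P T x B * indicator A x
       = (\<integral>\<^sup>+y. ennreal (\<pi> x) * dens x y * indicator A x * indicator B y \<partial>M)
        + ennreal (\<pi> x) * Rej x * indicator A x * indicator B x"
      unfolding e kernel_expand[OF x B] acc_dens[OF x B]
      by (simp add: distrib_left distrib_right mult_ac)
  qed
  also have "\<dots> = (\<integral>\<^sup>+x. \<integral>\<^sup>+y. ennreal (\<pi> x) * dens x y * indicator A x * indicator B y \<partial>M \<partial>M)
     + (\<integral>\<^sup>+x. ennreal (\<pi> x) * Rej x * indicator A x * indicator B x \<partial>M)"
    by (rule nn_integral_add) measurable
  finally show ?thesis .
qed

lemma reversible:
  assumes A: "A \<in> sets M" and B: "B \<in> sets M"
  shows "(\<integral>\<^sup>+ x\<in>A. ennreal (\<pi> x) * mh_kernel M D \<pi> P T x B \<partial>M)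
       = (\<integral>\<^sup>+ y\<in>B. ennreal (\<pi> y) * mh_kernel M D \<pi> P T y A \<partial>M)"
proof -
  interpret MM: pair_sigma_finite M M by (intro pair_sigma_finite.intro M M)
  note [measurable] = A B dens_meas pi_meas
  have "(\<integral>\<^sup>+x. \<integral>\<^sup>+y. ennreal (\<pi> x) * dens x y * indicator A x * indicator B y \<partial>M \<partial>M)
      = (\<integral>\<^sup>+x. \<integral>\<^sup>+y. ennreal (\<pi> y) * dens y x * indicator A x * indicator B y \<partial>M \<partial>M)"
    by (intro nn_integral_cong) (simp add: dens_db)
  also have "\<dots> = (\<integral>\<^sup>+y. \<integral>\<^sup>+x. ennreal (\<pi> y) * dens y x * indicator A x * indicator B y \<partial>M \<partial>M)"
    by (rule MM.Fubini'[symmetric]) measurable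
  also have "\<dots> = (\<integral>\<^sup>+x. \<integral>\<^sup>+y. ennreal (\<pi> x) * dens x y * indicator B x * indicator A y \<partial>M \<partial>M)"
    by (simp add: mult_ac)
  finally have Q: "(\<integral>\<^sup>+x. \<integral>\<^sup>+y. ennreal (\<pi> x) * dens x y * indicator A x * indicator B y \<partial>M \<partial>M)
     = (\<integral>\<^sup>+x. \<integral>\<^sup>+y. ennreal (\<pi> x) * dens x y * indicator B x * indicator A y \<partial>M \<partial>M)" .
  have R: "(\<integral>\<^sup>+x. ennreal (\<pi> x) * Rej x * indicator A x * indicator B x \<partial>M)
     = (\<integral>\<^sup>+x. ennreal (\<pi> x) * Rej x * indicator B x * indicator A x \<partial>M)"
    by (simp add: mult_ac)
  show ?thesis unfolding decomp[OF A B] decomp[OF B A] Q R ..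
qed

lemma meas_Q:
  assumes x: "x \<in> space M" and zs: "\<And>t. t < n \<Longrightarrow> zs t \<in> space D"
  shows "(\<lambda>xs. \<Prod>t<n. P (mc_path x xs t) (mc_path x xs (Suc t)) (zs t)) \<in> borel_measurable (PiM {1..n} (\<lambda>_. M))"
proof -
  have mp: "(\<lambda>xs. mc_path x xs t) \<in> measurable (PiM {1..n} (\<lambda>_. M)) M" if "t \<le> n" for t
  proof (cases "t = 0")
    case True then show ?thesis using x by (simp add: mc_path_def)
  next
    case False
    then have t1: "t \<in> {1..n}" using that by auto
    have "(\<lambda>xs. mc_path x xs t) = (\<lambda>xs. xs t)" using False by (auto simp: mc_path_def)
    then show ?thesis using measurable_component_singleton[OF t1] by simp
  qed
  show ?thesis
  proof (rule borel_measurable_prod)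
    fix t assume "t \<in> {..<n}"
    then show "(\<lambda>xs. P (mc_path x xs t) (mc_path x xs (Suc t)) (zs t)) \<in> borel_measurable (PiM {1..n} (\<lambda>_. M))"
      by (intro meas_P mp measurable_const zs) auto
  qed
qed

lemma total_n:
  assumes x: "x \<in> space M" and zs: "\<And>t. t < n \<Longrightarrow> zs t \<in> space D"
  shows "(\<integral>\<^sup>+xs. ennreal (\<Prod>t<n. P (mc_path x xs t) (mc_path x xs (Suc t)) (zs t)) \<partial>PiM {1..n} (\<lambda>_. M)) = 1"
  using zs
proof (induction n)
  case 0
  interpret PS: product_sigma_finite "\<lambda>_. M" using M by (simp add: product_sigma_finite_def)
  show ?case by (simp add: PS.nn_integral_empty PiM_empty)
next
  case (Suc n)
  interpret PS: product_sigma_finite "\<lambda>_. M" using M by (simp add: product_sigma_finite_def)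
  have ins: "{1..Suc n} = insert (Suc n) {1..n}" by auto
  note mQ0[measurable] = meas_Q[OF x Suc.prems]
  have mQ: "(\<lambda>xs. ennreal (\<Prod>t<Suc n. P (mc_path x xs t) (mc_path x xs (Suc t)) (zs t)))
      \<in> borel_measurable (PiM {1..Suc n} (\<lambda>_. M))"
    by measurable
  have psp: "mc_path x xs t \<in> space M" if "xs \<in> space (PiM {1..n} (\<lambda>_. M))" "t \<le> n" for xs t
    using that x by (auto simp: mc_path_def space_PiM)
  have "(\<integral>\<^sup>+xs. ennreal (\<Prod>t<Suc n. P (mc_path x xs t) (mc_path x xs (Suc t)) (zs t)) \<partial>PiM {1..Suc n} (\<lambda>_. M))
      = (\<integral>\<^sup>+xs. \<integral>\<^sup>+y. ennreal (\<Prod>t<Suc n. P (mc_path x (xs(Suc n := y)) t) (mc_path x (xs(Suc n := y)) (Suc t)) (zs t)) \<partial>M \<partial>PiM {1..n} (\<lambda>_. M))"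
    unfolding ins by (rule PS.product_nn_integral_insert) (use mQ[unfolded ins] in auto)
  also have "\<dots> = (\<integral>\<^sup>+xs. ennreal (\<Prod>t<n. P (mc_path x xs t) (mc_path x xs (Suc t)) (zs t)) \<partial>PiM {1..n} (\<lambda>_. M))"
  proof (rule nn_integral_cong)
    fix xs assume xs: "xs \<in> space (PiM {1..n} (\<lambda>_. M))"
    define c where "c = (\<Prod>t<n. P (mc_path x xs t) (mc_path x xs (Suc t)) (zs t))"
    have c0: "0 \<le> c" unfolding c_def
      using psp[OF xs] Suc.prems P_nonneg by (intro prod_nonneg) auto
    have eq: "(\<Prod>t<Suc n. P (mc_path x (xs(Suc n := y)) t) (mc_path x (xs(Suc n := y)) (Suc t)) (zs t))
        = c * P (mc_path x xs n) y (zs n)" for y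
    proof -
      have "(\<Prod>t<n. P (mc_path x (xs(Suc n := y)) t) (mc_path x (xs(Suc n := y)) (Suc t)) (zs t)) = c"
        unfolding c_def by (rule prod.cong) (auto simp: mc_path_def)
      then show ?thesis by (simp add: mc_path_def)
    qed
    have mP0[measurable]: "(\<lambda>y. P (mc_path x xs n) y (zs n)) \<in> borel_measurable M"
      using meas_P[OF measurable_const[OF psp[OF xs order_refl]] measurable_ident_sets[OF refl] measurable_const[OF Suc.prems[OF lessI]]]
      by simp
    have mP: "(\<lambda>y. ennreal (P (mc_path x xs n) y (zs n))) \<in> borel_measurable M"
      by measurable
    have "(\<integral>\<^sup>+y. ennreal (\<Prod>t<Suc n. P (mc_path x (xs(Suc n := y)) t) (mc_path x (xs(Suc n := y)) (Suc t)) (zs t)) \<partial>M)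
        = (\<integral>\<^sup>+y. ennreal c * ennreal (P (mc_path x xs n) y (zs n)) \<partial>M)"
      unfolding eq using c0 by (simp add: ennreal_mult')
    also have "\<dots> = ennreal c * (\<integral>\<^sup>+y. ennreal (P (mc_path x xs n) y (zs n)) \<partial>M)"
      by (rule nn_integral_cmult[OF mP])
    also have "\<dots> = ennreal c"
      using P_prob[OF psp[OF xs order_refl] Suc.prems[OF lessI]] by simp
    finally show "(\<integral>\<^sup>+y. ennreal (\<Prod>t<Suc n. P (mc_path x (xs(Suc n := y)) t) (mc_path x (xs(Suc n := y)) (Suc t)) (zs t)) \<partial>M)
        = ennreal (\<Prod>t<n. P (mc_path x xs t) (mc_path x xs (Suc t)) (zs t))"
      unfolding c_def .
  qed
  also have "\<dots> = 1" using Suc by simp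
  finally show ?case .
qed

lemma kernel_one:
  assumes y: "y \<in> space M"
  shows "mh_kernel M D \<pi> P T y (space M) = 1"
proof -
  interpret ZP: prob_space ZSp by (intro prob_space_PiM D)
  have "mh_kernel M D \<pi> P T y (space M) = (\<integral>\<^sup>+zs. 1 \<partial>ZSp)"
    unfolding mh_kernel_def
  proof (rule nn_integral_cong)
    fix zs assume zs: "zs \<in> space ZSp"
    have "(\<integral>\<^sup>+ xs. ennreal (path_weight P T y xs zs) *
         (ennreal (accept_prob \<pi> P T y xs zs) * indicator (space M) (xs T)
          + ennreal (1 - accept_prob \<pi> P T y xs zs) * indicator (space M) y) \<partial>XT)
        = (\<integral>\<^sup>+ xs. ennreal (path_weight P T y xs zs) \<partial>XT)"
    proof (rule nn_integral_cong)
      fix xs assume xs: "xs \<in> space XT"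
      have psp: "mc_path y xs t \<in> space M" if "t \<le> T" for t
        using that y xs by (auto simp: mc_path_def space_PiM)
      have xT: "xs T \<in> space M" using xs T by (auto simp: space_PiM)
      have "0 \<le> \<pi> (xs T) / \<pi> y *
         (\<Prod>t<T. P (mc_path y xs (Suc t)) (mc_path y xs t) (zs t) / P (mc_path y xs t) (mc_path y xs (Suc t)) (zs t))"
        using psp ZSp_mem[OF zs] P_nonneg pi_nonneg y xT
        by (intro mult_nonneg_nonneg divide_nonneg_nonneg prod_nonneg) auto
      then have a0: "0 \<le> accept_prob \<pi> P T y xs zs" unfolding accept_prob_def by simp
      have a1: "accept_prob \<pi> P T y xs zs \<le> 1" unfolding accept_prob_def by simp
      have "ennreal (accept_prob \<pi> P T y xs zs) + ennreal (1 - accept_prob \<pi> P T y xs zs) = 1"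
        using a0 a1 by (subst ennreal_plus[symmetric]) auto
      then show "ennreal (path_weight P T y xs zs) *
         (ennreal (accept_prob \<pi> P T y xs zs) * indicator (space M) (xs T)
          + ennreal (1 - accept_prob \<pi> P T y xs zs) * indicator (space M) y)
        = ennreal (path_weight P T y xs zs)"
        using xT y by simp
    qed
    also have "\<dots> = 1"
      unfolding path_weight_def by (rule total_n[OF y ZSp_mem[OF zs]])
    finally show "(\<integral>\<^sup>+ xs. ennreal (path_weight P T y xs zs) *
         (ennreal (accept_prob \<pi> P T y xs zs) * indicator (space M) (xs T)
          + ennreal (1 - accept_prob \<pi> P T y xs zs) * indicator (space M) y) \<partial>XT) = 1" .
  qed
  also have "\<dots> = 1" by (simp add: ZP.emeasure_space_1)
  finally show ?thesis .
qed

lemma stationary: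
  assumes B: "B \<in> sets M"
  shows "(\<integral>\<^sup>+ x. ennreal (\<pi> x) * mh_kernel M D \<pi> P T x B \<partial>M) = (\<integral>\<^sup>+ x\<in>B. ennreal (\<pi> x) \<partial>M)"
proof -
  have "(\<integral>\<^sup>+ x. ennreal (\<pi> x) * mh_kernel M D \<pi> P T x B \<partial>M)
      = (\<integral>\<^sup>+ x\<in>space M. ennreal (\<pi> x) * mh_kernel M D \<pi> P T x B \<partial>M)"
    by (rule nn_integral_cong) simp
  also have "\<dots> = (\<integral>\<^sup>+ y\<in>B. ennreal (\<pi> y) * mh_kernel M D \<pi> P T y (space M) \<partial>M)"
    by (rule reversible[OF sets.top B])
  also have "\<dots> = (\<integral>\<^sup>+ x\<in>B. ennreal (\<pi> x) \<partial>M)"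
    by (rule nn_integral_cong) (simp add: kernel_one)
  finally show ?thesis .
qed
end


theorem mainTheorem3:
  fixes M :: "'a measure" and D :: "'z measure"
    and \<pi> :: "'a \<Rightarrow> real" and P :: "'a \<Rightarrow> 'a \<Rightarrow> 'z \<Rightarrow> real" and T :: nat
  assumes M: "sigma_finite_measure M"
    and D: "prob_space D"
    and pi_meas: "\<pi> \<in> borel_measurable M"
    and pi_nonneg: "\<And>x. x \<in> space M \<Longrightarrow> 0 \<le> \<pi> x"
    and pi_prob: "(\<integral>\<^sup>+ x. ennreal (\<pi> x) \<partial>M) = 1"
    and P_meas: "(\<lambda>(x, y, z). P x y z) \<in> borel_measurable (M \<Otimes>\<^sub>M M \<Otimes>\<^sub>M D)"
    and P_nonneg: "\<And>x y z. x \<in> space M \<Longrightarrow> y \<in> space M \<Longrightarrow> z \<in> space D \<Longrightarrow> 0 \<le> P x y z"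
    and P_prob: "\<And>x z. x \<in> space M \<Longrightarrow> z \<in> space D \<Longrightarrow> (\<integral>\<^sup>+ y. ennreal (P x y z) \<partial>M) = 1"
    and T: "1 \<le> T"
  shows "(\<forall>x\<in>space M. \<forall>y\<in>space M.
            ennreal (\<pi> x) * mh_density M D \<pi> P T x y = ennreal (\<pi> y) * mh_density M D \<pi> P T y x)
       \<and> (\<forall>A\<in>sets M. \<forall>B\<in>sets M.
            (\<integral>\<^sup>+ x\<in>A. ennreal (\<pi> x) * mh_kernel M D \<pi> P T x B \<partial>M)
          = (\<integral>\<^sup>+ y\<in>B. ennreal (\<pi> y) * mh_kernel M D \<pi> P T y A \<partial>M))
       \<and> (\<forall>B\<in>sets M.
            (\<integral>\<^sup>+ x. ennreal (\<pi> x) * mh_kernel M D \<pi> P T x B \<partial>M)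
          = (\<integral>\<^sup>+ x\<in>B. ennreal (\<pi> x) \<partial>M))"
proof -
  interpret mhs M D \<pi> P T
    using M D pi_meas pi_nonneg P_meas P_nonneg P_prob T by (simp add: mhs_def)
  show ?thesis
    by (intro conjI ballI dens_db reversible stationary)
qed

end
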